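(* Let $r>c>\nu$ and $0<t<r-\nu$, set $R=(r-c)/(r-\nu)$, $\gamma=t/(r-\nu)$, fix $\rho\in[0,1)$, and for each integer $n\ge1$ let $L_n=\sqrt{n/(1+(n-1)\rho)}$ and let $Y_n$ be the unique real solution of $$R=\gamma\,\Phi(Y_n)+(1-\gamma)\,\Phi(L_nY_n),$$ with $\Phi$ the standard normal cdf. If $R>1/2$, then $0<Y_1<L_2Y_2<L_3Y_3<\dots<L_nY_n<\dots$. If $R<1/2$, then $0>Y_1>L_2Y_2>L_3Y_3>\dots>L_nY_n>\dots$.
   Context: $Y_n$ is the standardized optimal common order quantity of a transshipment coalition of $n$ identical newsvendors (selling price $r$, cost $c$, salvage value $\nu$, unit transportation cost $t$) facing jointly normal demands with common pairwise correlation $\rho$. Note $L_1=1$. The right-hand side of the defining equation is strictly increasing in $Y_n$ from $0$ to $1$, so $Y_n$ is well defined. *)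

theory Defs
  imports "HOL-Probability.Probability"
begin

definition Phi :: "real \<Rightarrow> real" where
  "Phi x = (LBINT y:{..x}. std_normal_density y)"

definition Lfac :: "real \<Rightarrow> nat \<Rightarrow> real" where
  "Lfac \<rho> n = sqrt (real n / (1 + (real n - 1) * \<rho>))"

definition Yopt :: "real \<Rightarrow> real \<Rightarrow> real \<Rightarrow> real \<Rightarrow> real \<Rightarrow> nat \<Rightarrow> real" where
  "Yopt r c \<nu> t \<rho> n = (THE y. (r - c) / (r - \<nu>) =
      t / (r - \<nu>) * Phi y + (1 - t / (r - \<nu>)) * Phi (Lfac \<rho> n * y))"

end

theory Submission
  imports Defs
begin

lemma Phi_alt: "Phi x = (\<integral>z. std_normal_density z * indicator {..x} z \<partial>lborel)"
  unfolding Phi_def set_lebesgue_integral_def by (simp add: mult.commute)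

lemma int_ind: "integrable lborel (\<lambda>z. std_normal_density z * indicator A z)" if "A \<in> sets borel"
  using that by (intro integrable_real_mult_indicator) auto

lemma Phi_diff: assumes "x \<le> y"
  shows "Phi y - Phi x = (\<integral>z. std_normal_density z * indicator {x<..y} z \<partial>lborel)"
proof -
  have "\<And>z. std_normal_density z * indicator {..y} z =
     std_normal_density z * indicator {..x} z + std_normal_density z * indicator {x<..y} z"
    using assms by (auto simp: indicator_def)
  then have "Phi y = (\<integral>z. std_normal_density z * indicator {..x} z + std_normal_density z * indicator {x<..y} z \<partial>lborel)"
    unfolding Phi_alt by simp
  also have "\<dots> = Phi x + (\<integral>z. std_normal_density z * indicator {x<..y} z \<partial>lborel)"
    unfolding Phi_alt by (rule Bochner_Integration.integral_add[OF int_ind int_ind]) auto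
  finally show ?thesis by simp
qed

lemma dens_le1: "std_normal_density z \<le> 1"
proof -
  have "exp (- z\<^sup>2 / 2) \<le> 1" by simp
  moreover have "1 / sqrt (2 * pi) \<le> 1" using pi_gt3 by (simp add: real_le_rsqrt)
  ultimately show ?thesis unfolding std_normal_density_def
    by (metis exp_gt_zero less_eq_real_def mult_le_one zero_le_divide_1_iff real_sqrt_ge_zero mult_nonneg_nonneg pi_ge_zero zero_le_numeral)
qed

lemma dens_mono: assumes a: "\<bar>z\<bar> \<le> B" shows "std_normal_density B \<le> std_normal_density z"
proof -
  have "z\<^sup>2 \<le> B\<^sup>2" using a abs_le_square_iff[of z B] by simp
  then show ?thesis unfolding std_normal_density_def by (intro mult_left_mono) auto
qed

lemma dens_pos: "0 < std_normal_density z"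
  by (rule normal_density_pos) simp

lemma int_Ioc: "integrable lborel (indicator {x<..y} :: real \<Rightarrow> real)"
  by (cases "x \<le> y") (auto intro!: integrable_real_indicator)

lemma Phi_lip: assumes "x \<le> y" shows "Phi y - Phi x \<le> y - x"
proof -
  have "(\<integral>z. std_normal_density z * indicator {x<..y} z \<partial>lborel) \<le> (\<integral>z. indicator {x<..y} z \<partial>lborel)"
    by (rule integral_mono[OF int_ind int_Ioc]) (auto simp: indicator_def dens_le1)
  then show ?thesis using Phi_diff[OF assms] assms by simp
qed

lemma Phi_strict: assumes "x < y" shows "Phi x < Phi y"
proof -
  define B where "B = max \<bar>x\<bar> \<bar>y\<bar>"
  have "(\<integral>z. std_normal_density B * indicator {x<..y} z \<partial>lborel) \<le> (\<integral>z. std_normal_density z * indicator {x<..y} z \<partial>lborel)"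
    by (rule integral_mono[OF integrable_mult_right[OF int_Ioc] int_ind]) (auto intro!: dens_mono simp: indicator_def B_def)
  moreover have "(\<integral>z. std_normal_density B * indicator {x<..y} z \<partial>lborel) = std_normal_density B * (y - x)"
    using assms by simp
  moreover have "0 < std_normal_density B * (y - x)" using assms dens_pos by simp
  ultimately show ?thesis using Phi_diff[of x y] assms by linarith
qed

lemma Phi_cont: "continuous_on UNIV Phi"
proof -
  have "dist (Phi x) (Phi y) \<le> dist x y" for x y
    using Phi_lip[of x y] Phi_lip[of y x] Phi_strict[of x y] Phi_strict[of y x]
    by (cases "x \<le> y") (auto simp: dist_real_def abs_if)
  then show ?thesis
    by (metis continuous_on_iff le_less_trans)
qed

lemma Phi_compl: "Phi x + (\<integral>z. std_normal_density z * indicator {x<..} z \<partial>lborel) = 1"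
proof -
  have "1 = (\<integral>z. std_normal_density z \<partial>lborel)" by simp
  also have "\<dots> = (\<integral>z. std_normal_density z * indicator {..x} z + std_normal_density z * indicator {x<..} z \<partial>lborel)"
    by (rule Bochner_Integration.integral_cong) (auto simp: indicator_def)
  also have "\<dots> = Phi x + (\<integral>z. std_normal_density z * indicator {x<..} z \<partial>lborel)"
    unfolding Phi_alt by (rule Bochner_Integration.integral_add[OF int_ind int_ind]) auto
  finally show ?thesis by simp
qed

lemma moment2: "(\<integral>z. std_normal_density z * z^2 \<partial>lborel) = 1"
  using integral_std_normal_moment_even[of 1] by simp

lemma int_m2: "integrable lborel (\<lambda>z. std_normal_density z * z^2 / K^2)"
  using integrable_std_normal_moment[of 2] by simp

lemma Phi_low: assumes "0 < K" shows "Phi (-K) \<le> 1 / K^2"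
proof -
  have "Phi (-K) \<le> (\<integral>z. std_normal_density z * z^2 / K^2 \<partial>lborel)"
    unfolding Phi_alt
  proof (rule integral_mono[OF int_ind int_m2])
    fix z
    show "std_normal_density z * indicator {..-K} z \<le> std_normal_density z * z\<^sup>2 / K\<^sup>2"
    proof (cases "z \<le> -K")
      case True
      then have "K^2 \<le> z^2" using assms abs_le_square_iff[of K z] by simp
      then have "1 \<le> z^2 / K^2" using assms by simp
      then show ?thesis using True dens_pos[of z]
        by (simp add: mult_le_cancel_left1 times_divide_eq_right[symmetric] del: times_divide_eq_right)
    qed (auto simp: indicator_def)
  qed auto
  also have "\<dots> = 1 / K^2" using moment2 by simp
  finally show ?thesis .
qed

lemma Phi_high: assumes "0 < K" shows "1 - Phi K \<le> 1 / K^2"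
proof -
  have "(\<integral>z. std_normal_density z * indicator {K<..} z \<partial>lborel) \<le> (\<integral>z. std_normal_density z * z^2 / K^2 \<partial>lborel)"
  proof (rule integral_mono[OF int_ind int_m2])
    fix z
    show "std_normal_density z * indicator {K<..} z \<le> std_normal_density z * z\<^sup>2 / K\<^sup>2"
    proof (cases "K < z")
      case True
      then have "K^2 \<le> z^2" using assms abs_le_square_iff[of K z] by simp
      then have "1 \<le> z^2 / K^2" using assms by simp
      then show ?thesis using True dens_pos[of z]
        by (simp add: mult_le_cancel_left1 times_divide_eq_right[symmetric] del: times_divide_eq_right)
    qed (auto simp: indicator_def)
  qed auto
  also have "\<dots> = 1 / K^2" using moment2 by simp
  finally show ?thesis using Phi_compl[of K] by simp
qed

lemma Phi_zero: "Phi 0 = 1/2"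
proof -
  have "Phi 0 = \<bar>-1\<bar> *\<^sub>R (\<integral>x. std_normal_density (0 + -1 * x) * indicator {..0} (0 + -1 * x) \<partial>lborel)"
    unfolding Phi_alt by (rule lborel_integral_real_affine) simp
  also have "\<dots> = (\<integral>x. std_normal_density x * indicator {0..} x \<partial>lborel)"
    by (simp add: std_normal_density_def indicator_def)
  also have "\<dots> = (\<integral>x. std_normal_density x * indicator {0<..} x \<partial>lborel)"
    by (rule integral_cong_AE) (auto simp: indicator_def intro!: eventually_mono[OF AE_lborel_singleton[of 0]])
  finally show ?thesis using Phi_compl[of 0] by simp
qed

lemma Phi_mono: "x \<le> y \<Longrightarrow> Phi x \<le> Phi y"
  using Phi_strict[of x y] by (cases "x = y") auto

lemma Phi_small: assumes "0 < R" shows "\<exists>A\<le>0. \<forall>z\<le>A. Phi z < R"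
proof -
  define K where "K = 1 + 1 / R"
  have K1: "1 < K" using assms by (simp add: K_def)
  have "K \<le> K^2" using K1 by (simp add: power2_eq_square)
  then have "1 / K^2 \<le> 1 / K" using K1 by (intro frac_le) simp_all
  also have "1 / K < R" using assms K1 unfolding K_def by (simp add: field_simps)
  finally have lt: "1 / K^2 < R" .
  show ?thesis
  proof (intro exI[of _ "-K"] conjI allI impI)
    fix z assume "z \<le> -K"
    then have "Phi z \<le> Phi (-K)" by (rule Phi_mono)
    also have "\<dots> \<le> 1 / K^2" using K1 by (intro Phi_low) simp
    finally show "Phi z < R" using lt by simp
  qed (use K1 in simp)
qed

lemma Phi_large: assumes "R < 1" shows "\<exists>A\<ge>0. \<forall>z\<ge>A. R < Phi z"
proof -
  define K where "K = 1 + 1 / (1 - R)"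
  have K1: "1 < K" using assms by (simp add: K_def)
  have "K \<le> K^2" using K1 by (simp add: power2_eq_square)
  then have "1 / K^2 \<le> 1 / K" using K1 by (intro frac_le) simp_all
  also have "1 / K < 1 - R" using assms K1 mult_pos_pos[of "1-R" "1-R"] unfolding K_def by (simp add: field_simps algebra_simps)
  finally have lt: "1 / K^2 < 1 - R" .
  show ?thesis
  proof (intro exI[of _ "K"] conjI allI impI)
    fix z assume "K \<le> z"
    then have "Phi K \<le> Phi z" by (rule Phi_mono)
    moreover have "1 - Phi K \<le> 1 / K^2" using K1 by (intro Phi_high) simp
    ultimately show "R < Phi z" using lt by simp
  qed (use K1 in simp)
qed

lemma solve_ex1:
  assumes g: "0 < g" "g < 1" and L: "0 < L" and R: "0 < R" "R < 1"
  shows "\<exists>!y. R = g * Phi y + (1 - g) * Phi (L * y)"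
proof -
  define G where "G y = g * Phi y + (1 - g) * Phi (L * y)" for y
  have Gs: "G x < G y" if "x < y" for x y
  proof -
    have "Phi x < Phi y" using that by (rule Phi_strict)
    moreover have "Phi (L*x) < Phi (L*y)" using that L by (intro Phi_strict) simp
    ultimately show ?thesis unfolding G_def using g
      by (intro add_strict_mono) simp_all
  qed
  obtain A where A: "A \<le> 0" "\<forall>z\<le>A. Phi z < R" using Phi_small[OF R(1)] by blast
  obtain B where B: "B \<ge> 0" "\<forall>z\<ge>B. R < Phi z" using Phi_large[OF R(2)] by blast
  define a where "a = min A (A / L)"
  define b where "b = max B (B / L)"
  have "a \<le> A" unfolding a_def by simp
  moreover have "L * a \<le> A" unfolding a_def using L A(1)
    by (metis min.cobounded2 mult_left_mono less_eq_real_def nonzero_mult_div_cancel_left times_divide_eq_right less_irrefl)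
  ultimately have "Phi a < R" "Phi (L*a) < R" using A by auto
  then have "g * Phi a + (1 - g) * Phi (L*a) < g * R + (1 - g) * R" using g
      by (intro add_strict_mono) simp_all
  then have Ga: "G a < R" unfolding G_def by (simp add: algebra_simps)
  have "B \<le> b" unfolding b_def by simp
  moreover have "B \<le> L * b" unfolding b_def using L B(1)
    by (metis max.cobounded2 mult_left_mono less_eq_real_def nonzero_mult_div_cancel_left times_divide_eq_right less_irrefl)
  ultimately have "R < Phi b" "R < Phi (L*b)" using B by auto
  then have "g * R + (1 - g) * R < g * Phi b + (1 - g) * Phi (L*b)" using g
      by (intro add_strict_mono) simp_all
  then have Gb: "R < G b" unfolding G_def by (simp add: algebra_simps)
  have ab: "a \<le> b" unfolding a_def b_def using A(1) B(1) by linarith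
  have cont: "continuous_on {a..b} G"
    unfolding G_def
    by (intro continuous_intros continuous_on_compose2[OF Phi_cont] continuous_on_subset[OF Phi_cont]) auto
  obtain y where "G y = R" using IVT'[of G a R b, OF _ _ ab cont] Ga Gb by auto
  moreover have "G z = R \<Longrightarrow> z = y" for z using Gs[of z y] Gs[of y z] \<open>G y = R\<close>
    by (cases z y rule: linorder_cases) auto
  ultimately show ?thesis unfolding G_def by metis
qed

lemma Phi_le_half: "x \<le> 0 \<Longrightarrow> Phi x \<le> 1/2"
  using Phi_mono[of x 0] Phi_zero by simp

lemma Phi_ge_half: "0 \<le> x \<Longrightarrow> 1/2 \<le> Phi x"
  using Phi_mono[of 0 x] Phi_zero by simp

lemma compare_pos:
  assumes g: "0 < g" "g < 1" and L: "0 < L1" "L1 < L2" and Rh: "R > 1/2"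
    and e1: "R = g * Phi y1 + (1 - g) * Phi (L1 * y1)"
    and e2: "R = g * Phi y2 + (1 - g) * Phi (L2 * y2)"
  shows "0 < L1 * y1 \<and> L1 * y1 < L2 * y2"
proof -
  have pos: "0 < L * y" if "0 < L" "R = g * Phi y + (1 - g) * Phi (L * y)" for L y
  proof (rule ccontr)
    assume "\<not> 0 < L * y"
    then have "L * y \<le> 0" by simp
    moreover have "y \<le> 0" using \<open>L*y \<le> 0\<close> \<open>0 < L\<close> by (simp add: mult_le_0_iff)
    ultimately have "Phi y \<le> 1/2" "Phi (L*y) \<le> 1/2" using Phi_le_half[of y] Phi_le_half[of "L*y"] by auto
    then have "g * Phi y + (1 - g) * Phi (L * y) \<le> g * (1/2) + (1 - g) * (1/2)"
      using g by (intro add_mono mult_left_mono) auto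
    moreover have "g * (1/2) + (1 - g) * (1/2) = (1/2::real)" by (simp add: field_simps)
    ultimately show False using that(2) Rh by linarith
  qed
  have p1: "0 < L1 * y1" using pos[OF L(1) e1] .
  have p2: "0 < L2 * y2" using pos[of L2 y2] L e2 by simp
  have "L1 * y1 < L2 * y2"
  proof (rule ccontr)
    assume "\<not> ?thesis"
    then have le: "L2 * y2 \<le> L1 * y1" by simp
    have y1: "0 < y1" using p1 L by (simp add: zero_less_mult_iff)
    have "y2 = (L2 * y2) / L2" using L by simp
    also have "\<dots> \<le> (L1 * y1) / L2" by (rule divide_right_mono[OF le]) (use L in simp)
    also have "\<dots> < (L1 * y1) / L1" using L p1 by (intro divide_strict_left_mono) auto
    also have "\<dots> = y1" using L by simp
    finally have "y2 < y1" .
    then have "Phi y2 < Phi y1" by (rule Phi_strict)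
    moreover have "Phi (L2*y2) \<le> Phi (L1*y1)" using le by (rule Phi_mono)
    ultimately have "g * Phi y2 + (1 - g) * Phi (L2 * y2) < g * Phi y1 + (1 - g) * Phi (L1 * y1)"
      using g by (intro add_less_le_mono mult_strict_left_mono mult_left_mono) auto
    then show False using e1 e2 by simp
  qed
  then show ?thesis using p1 by simp
qed

lemma compare_neg:
  assumes g: "0 < g" "g < 1" and L: "0 < L1" "L1 < L2" and Rh: "R < 1/2"
    and e1: "R = g * Phi y1 + (1 - g) * Phi (L1 * y1)"
    and e2: "R = g * Phi y2 + (1 - g) * Phi (L2 * y2)"
  shows "L1 * y1 < 0 \<and> L2 * y2 < L1 * y1"
proof -
  have neg: "L * y < 0" if "0 < L" "R = g * Phi y + (1 - g) * Phi (L * y)" for L y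
  proof (rule ccontr)
    assume "\<not> L * y < 0"
    then have "0 \<le> L * y" by simp
    moreover have "0 \<le> y" using \<open>0 \<le> L*y\<close> \<open>0 < L\<close> by (simp add: zero_le_mult_iff)
    ultimately have "1/2 \<le> Phi y" "1/2 \<le> Phi (L*y)" using Phi_ge_half[of y] Phi_ge_half[of "L*y"] by auto
    then have "g * (1/2) + (1 - g) * (1/2) \<le> g * Phi y + (1 - g) * Phi (L * y)"
      using g by (intro add_mono mult_left_mono) auto
    moreover have "g * (1/2) + (1 - g) * (1/2) = (1/2::real)" by (simp add: field_simps)
    ultimately show False using that(2) Rh by linarith
  qed
  have p1: "L1 * y1 < 0" using neg[OF L(1) e1] .
  have p2: "L2 * y2 < 0" using neg[of L2 y2] L e2 by simp
  have "L2 * y2 < L1 * y1"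
  proof (rule ccontr)
    assume "\<not> ?thesis"
    then have le: "L1 * y1 \<le> L2 * y2" by simp
    have "y1 = (L1 * y1) / L1" using L by simp
    also have "\<dots> < (L1 * y1) / L2" using L p1 by (intro divide_strict_left_mono_neg) auto
    also have "\<dots> \<le> (L2 * y2) / L2" by (rule divide_right_mono[OF le]) (use L in simp)
    also have "\<dots> = y2" using L by simp
    finally have "y1 < y2" .
    then have "Phi y1 < Phi y2" by (rule Phi_strict)
    moreover have "Phi (L1*y1) \<le> Phi (L2*y2)" using le by (rule Phi_mono)
    ultimately have "g * Phi y1 + (1 - g) * Phi (L1 * y1) < g * Phi y2 + (1 - g) * Phi (L2 * y2)"
      using g by (intro add_less_le_mono mult_strict_left_mono mult_left_mono) auto
    then show False using e1 e2 by simp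
  qed
  then show ?thesis using p1 by simp
qed

lemma Lfac_pos: assumes "0 \<le> \<rho>" "n \<ge> 1" shows "0 < Lfac \<rho> n"
proof -
  have "0 \<le> (real n - 1) * \<rho>" using assms by simp
  moreover have "0 < real n" using assms by simp
  ultimately have "0 < real n / (1 + (real n - 1) * \<rho>)" by (intro divide_pos_pos) linarith+
  then show ?thesis unfolding Lfac_def by simp
qed

lemma Lfac_1: "Lfac \<rho> 1 = 1" unfolding Lfac_def by simp

lemma Lfac_strict: assumes "0 \<le> \<rho>" "\<rho> < 1" "n \<ge> 1" shows "Lfac \<rho> n < Lfac \<rho> (n+1)"
proof -
  have d1: "0 < 1 + (real n - 1) * \<rho>" using assms by (simp add: add_pos_nonneg)
  have d2: "0 < 1 + real n * \<rho>" using assms by (simp add: add_pos_nonneg)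
  have "real n * (1 + real n * \<rho>) < (real n + 1) * (1 + (real n - 1) * \<rho>)"
    using assms by (simp add: algebra_simps)
  then have "real n / (1 + (real n - 1) * \<rho>) < (real n + 1) / (1 + real n * \<rho>)"
    using d1 d2 by (simp add: divide_simps)
  then show ?thesis unfolding Lfac_def by (simp add: add.commute)
qed

theorem theorem4:
  fixes r c \<nu> t \<rho> :: real
  assumes "\<nu> < c" and "c < r"
    and "0 < t" and "t < r - \<nu>"
    and "0 \<le> \<rho>" and "\<rho> < 1"
  shows "((r - c) / (r - \<nu>) > 1/2 \<longrightarrow>
            0 < Yopt r c \<nu> t \<rho> 1 \<and>
            (\<forall>n::nat. n \<ge> 1 \<longrightarrow>
               Lfac \<rho> n * Yopt r c \<nu> t \<rho> n < Lfac \<rho> (n + 1) * Yopt r c \<nu> t \<rho> (n + 1)))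
       \<and> ((r - c) / (r - \<nu>) < 1/2 \<longrightarrow>
            0 > Yopt r c \<nu> t \<rho> 1 \<and>
            (\<forall>n::nat. n \<ge> 1 \<longrightarrow>
               Lfac \<rho> n * Yopt r c \<nu> t \<rho> n > Lfac \<rho> (n + 1) * Yopt r c \<nu> t \<rho> (n + 1)))"
proof -
  define R where "R = (r - c) / (r - \<nu>)"
  define g where "g = t / (r - \<nu>)"
  define Y where "Y n = Yopt r c \<nu> t \<rho> n" for n
  have rn: "0 < r - \<nu>" using assms by simp
  have R01: "0 < R" "R < 1" unfolding R_def using assms rn by (simp_all add: field_simps)
  have g01: "0 < g" "g < 1" unfolding g_def using assms rn by (simp_all add: field_simps)
  have Yp: "R = g * Phi (Y n) + (1 - g) * Phi (Lfac \<rho> n * Y n)" if "n \<ge> 1" for n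
  proof -
    have ex: "\<exists>!y. R = g * Phi y + (1 - g) * Phi (Lfac \<rho> n * y)"
      by (rule solve_ex1[OF g01 Lfac_pos[OF assms(5) that] R01])
    show ?thesis unfolding Y_def Yopt_def R_def[symmetric] g_def[symmetric]
      by (rule theI'[OF ex])
  qed
  have Lpos: "\<And>n. n \<ge> 1 \<Longrightarrow> 0 < Lfac \<rho> n" using Lfac_pos assms(5) by blast
  have Lstr: "\<And>n. n \<ge> 1 \<Longrightarrow> Lfac \<rho> n < Lfac \<rho> (n+1)" using Lfac_strict assms(5,6) by blast
  have P: "R > 1/2 \<longrightarrow> 0 < Y 1 \<and> (\<forall>n::nat. n \<ge> 1 \<longrightarrow> Lfac \<rho> n * Y n < Lfac \<rho> (n + 1) * Y (n + 1))"
  proof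
    assume h: "R > 1/2"
    have c: "0 < Lfac \<rho> n * Y n \<and> Lfac \<rho> n * Y n < Lfac \<rho> (n + 1) * Y (n + 1)" if "n \<ge> 1" for n
      by (rule compare_pos[OF g01 Lpos[OF that] Lstr[OF that] h Yp[OF that] Yp]) (use that in simp)
    show "0 < Y 1 \<and> (\<forall>n::nat. n \<ge> 1 \<longrightarrow> Lfac \<rho> n * Y n < Lfac \<rho> (n + 1) * Y (n + 1))"
    proof
      have "0 < Lfac \<rho> 1 * Y 1" using c[of 1] by blast
      then show "0 < Y 1" by (simp only: Lfac_1 mult_1)
    qed (use c in blast)
  qed
  have N: "R < 1/2 \<longrightarrow> 0 > Y 1 \<and> (\<forall>n::nat. n \<ge> 1 \<longrightarrow> Lfac \<rho> n * Y n > Lfac \<rho> (n + 1) * Y (n + 1))"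
  proof
    assume h: "R < 1/2"
    have c: "Lfac \<rho> n * Y n < 0 \<and> Lfac \<rho> (n + 1) * Y (n + 1) < Lfac \<rho> n * Y n" if "n \<ge> 1" for n
      by (rule compare_neg[OF g01 Lpos[OF that] Lstr[OF that] h Yp[OF that] Yp]) (use that in simp)
    show "0 > Y 1 \<and> (\<forall>n::nat. n \<ge> 1 \<longrightarrow> Lfac \<rho> n * Y n > Lfac \<rho> (n + 1) * Y (n + 1))"
    proof
      have "Lfac \<rho> 1 * Y 1 < 0" using c[of 1] by blast
      then show "0 > Y 1" by (simp only: Lfac_1 mult_1)
    qed (use c in blast)
  qed
  show ?thesis using P N unfolding R_def Y_def by blast
qed

end
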